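(* Let $\mathcal{V}$ be a real vector space of dimension $d$, let $\tau\in\vee^2\mathcal{V}^*$ have rank $p+1$ and Lorentzian signature, and let $\gamma$ be a positive-definite metric on $\mathrm{Ker}(\tau)=\{v\in\mathcal{V}:\tau(v,\cdot)=0\}$. Let $f_p(\mathcal{V},\tau,\gamma)$ be the set of frames $(\tau_A,e_i)$ of $\mathcal{V}$ ($A=0,\dots,p$, $i=1,\dots,d-p-1$) with $e_i\in\mathrm{Ker}(\tau)$, $\tau(\tau_A,\tau_B)=\eta_{AB}$ and $\gamma(e_i,e_j)=\delta_{ij}$. Then the formula $$(\tau_A,e_i)\cdot g=\big({\Lambda^A}_B\tau_A+{v^i}_Be_i,\ {R^i}_je_i\big),\qquad g=\begin{pmatrix}{\Lambda^A}_B&0\\ {v^i}_B&{R^i}_j\end{pmatrix}\in G_p,$$ defines a right action of $G_p$ on $f_p(\mathcal{V},\tau,\gamma)$ which is free and transitive, i.e.\ $f_p(\mathcal{V},\tau,\gamma)$ is a $G_p$-torsor.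
   Context: $\eta_{AB}=\mathrm{diag}(-1,1,\dots,1)$ is the Lorentz metric in $p+1$ dimensions. $G_p$ is the group of $d\times d$ real block matrices $\begin{pmatrix}\Lambda&0\\ v&R\end{pmatrix}$ with $\Lambda\in O(1,p)$, $R\in O(d-p-1)$ and $v$ an arbitrary real $(d-p-1)\times(p+1)$ matrix. *)

theory Defs
  imports "HOL-Analysis.Analysis" "Jordan_Normal_Form.Matrix"
begin

text \<open>The real vector space V is modelled by a finite-dimensional type 'v
 (class euclidean_space; its inner product plays no role), d = DIM('v).\<close>

definition sym_bilinear :: "('v::real_vector \<Rightarrow> 'v \<Rightarrow> real) \<Rightarrow> bool" where
  "sym_bilinear \<tau> \<longleftrightarrow> bilinear \<tau> \<and> (\<forall>x y. \<tau> x y = \<tau> y x)"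

definition kerf :: "('v::real_vector \<Rightarrow> 'v \<Rightarrow> real) \<Rightarrow> 'v set" where
  "kerf \<tau> = {v. \<forall>w. \<tau> v w = 0}"

definition form_rank :: "('v::euclidean_space \<Rightarrow> 'v \<Rightarrow> real) \<Rightarrow> nat" where
  "form_rank \<tau> = DIM('v) - dim (kerf \<tau>)"

definition pos_index :: "('v::euclidean_space \<Rightarrow> 'v \<Rightarrow> real) \<Rightarrow> nat" where
  "pos_index \<tau> = Max {dim S | S. subspace S \<and> (\<forall>x\<in>S. x \<noteq> 0 \<longrightarrow> \<tau> x x > 0)}"

definition neg_index :: "('v::euclidean_space \<Rightarrow> 'v \<Rightarrow> real) \<Rightarrow> nat" where
  "neg_index \<tau> = Max {dim S | S. subspace S \<and> (\<forall>x\<in>S. x \<noteq> 0 \<longrightarrow> \<tau> x x < 0)}"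

definition lorentzian_sig :: "('v::euclidean_space \<Rightarrow> 'v \<Rightarrow> real) \<Rightarrow> nat \<Rightarrow> bool" where
  "lorentzian_sig \<tau> p \<longleftrightarrow> neg_index \<tau> = 1 \<and> pos_index \<tau> = p"

definition pos_def_metric_on :: "'v::real_vector set \<Rightarrow> ('v \<Rightarrow> 'v \<Rightarrow> real) \<Rightarrow> bool" where
  "pos_def_metric_on K \<gamma> \<longleftrightarrow>
     (\<forall>x\<in>K. \<forall>y\<in>K. \<gamma> x y = \<gamma> y x) \<and>
     (\<forall>x\<in>K. \<forall>y\<in>K. \<forall>z\<in>K. \<forall>a b. \<gamma> (a *\<^sub>R x + b *\<^sub>R y) z = a * \<gamma> x z + b * \<gamma> y z) \<and>
     (\<forall>x\<in>K. x \<noteq> 0 \<longrightarrow> \<gamma> x x > 0)"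

definition eta :: "nat \<Rightarrow> nat \<Rightarrow> real" where
  "eta A B = (if A = B then (if A = 0 then -1 else 1) else 0)"

definition eta_mat :: "nat \<Rightarrow> real mat" where
  "eta_mat p = mat (p+1) (p+1) (\<lambda>(A,B). eta A B)"

definition lorentz_group :: "nat \<Rightarrow> real mat set" where
  "lorentz_group p = {L. L \<in> carrier_mat (p+1) (p+1) \<and> transpose_mat L * eta_mat p * L = eta_mat p}"

definition orth_group :: "nat \<Rightarrow> real mat set" where
  "orth_group m = {R. R \<in> carrier_mat m m \<and> transpose_mat R * R = 1\<^sub>m m}"

text \<open>The group G_p of d x d block matrices (Lambda 0; v R).\<close>
definition Gp :: "nat \<Rightarrow> nat \<Rightarrow> real mat set" where
  "Gp d p = {g. g \<in> carrier_mat d d \<and> p + 1 \<le> d \<and>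
     (\<forall>A<p+1. \<forall>j<d-(p+1). g $$ (A, p+1+j) = 0) \<and>
     mat (p+1) (p+1) (\<lambda>(A,B). g $$ (A,B)) \<in> lorentz_group p \<and>
     mat (d-(p+1)) (d-(p+1)) (\<lambda>(i,j). g $$ (p+1+i, p+1+j)) \<in> orth_group (d-(p+1))}"

definition frames_p :: "nat \<Rightarrow> ('v::euclidean_space \<Rightarrow> 'v \<Rightarrow> real) \<Rightarrow> ('v \<Rightarrow> 'v \<Rightarrow> real)
     \<Rightarrow> ('v list \<times> 'v list) set" where
  "frames_p p \<tau> \<gamma> = {(Ts, Es).
     length Ts = p + 1 \<and> length Es = DIM('v) - (p+1) \<and>
     distinct (Ts @ Es) \<and> independent (set (Ts @ Es)) \<and> span (set (Ts @ Es)) = UNIV \<and>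
     (\<forall>i<length Es. Es ! i \<in> kerf \<tau>) \<and>
     (\<forall>A<p+1. \<forall>B<p+1. \<tau> (Ts ! A) (Ts ! B) = eta A B) \<and>
     (\<forall>i<length Es. \<forall>j<length Es. \<gamma> (Es ! i) (Es ! j) = (if i = j then 1 else 0))}"

text \<open>The right action:
 (tau_A, e_i) . g = (Lambda^A_B tau_A + v^i_B e_i, R^i_j e_i),
 where Lambda^A_B = g(A,B), v^i_B = g(p+1+i,B), R^i_j = g(p+1+i,p+1+j).\<close>
definition frame_act :: "nat \<Rightarrow> 'v::real_vector list \<times> 'v list \<Rightarrow> real mat \<Rightarrow> 'v list \<times> 'v list" where
  "frame_act p F g = (case F of (Ts, Es) \<Rightarrow>
     (map (\<lambda>B. (\<Sum>A<p+1. g $$ (A, B) *\<^sub>R Ts ! A) + (\<Sum>i<length Es. g $$ (p+1+i, B) *\<^sub>R Es ! i)) [0..<p+1],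
      map (\<lambda>j. \<Sum>i<length Es. g $$ (p+1+i, p+1+j) *\<^sub>R Es ! i) [0..<length Es]))"

end

theory Submission
  imports Defs
begin


lemma sum_split_add: fixes a b :: nat shows "(\<Sum>m<a+b. f m) = (\<Sum>m<a. f m) + (\<Sum>i<b. f (a+i))"
  by (induction b) (auto simp: add.assoc)

definition li :: "'v::real_vector list \<Rightarrow> bool" where
  "li xs \<longleftrightarrow> (\<forall>c. (\<Sum>k<length xs. c k *\<^sub>R xs!k) = 0 \<longrightarrow> (\<forall>k<length xs. c k = 0))"

lemma li_distinct: assumes "li xs" shows "distinct xs"
proof (subst distinct_conv_nth, intro allI impI)
  fix i j assume ij: "i < length xs" "j < length xs" "i \<noteq> j"
  show "xs!i \<noteq> xs!j"
  proof
    assume eq: "xs!i = xs!j"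
    define c where "c = (\<lambda>k. if k = i then 1 else if k = j then -1 else (0::real))"
    have "(\<Sum>k<length xs. c k *\<^sub>R xs!k) = (\<Sum>k<length xs. (if k = i then xs!i else 0) - (if k = j then xs!j else 0))"
      by (rule sum.cong) (auto simp: c_def ij)
    also have "\<dots> = 0" using ij eq by (simp add: sum_subtractf)
    finally have "c i = 0" using assms ij unfolding li_def by blast
    then show False by (simp add: c_def)
  qed
qed

lemma sum_set_nth: "distinct xs \<Longrightarrow> (\<Sum>v\<in>set xs. f v) = (\<Sum>k<length xs. f (xs!k))"
proof -
  assume d: "distinct xs"
  have "set xs = (!) xs ` {..<length xs}" by (auto simp: in_set_conv_nth)
  moreover have "inj_on ((!) xs) {..<length xs}" using d by (simp add: inj_on_nth)
  ultimately show ?thesis by (simp add: sum.reindex)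
qed

lemma li_indep: assumes "li xs" shows "independent (set xs)"
proof
  assume "dependent (set xs)"
  then obtain u where u: "\<exists>v\<in>set xs. u v \<noteq> 0" "(\<Sum>v\<in>set xs. u v *\<^sub>R v) = 0"
    using dependent_finite by blast
  have d: "distinct xs" using assms li_distinct by blast
  have "(\<Sum>k<length xs. u (xs!k) *\<^sub>R xs!k) = 0" using u(2) sum_set_nth[OF d, of "\<lambda>v. u v *\<^sub>R v"] by simp
  then have "\<forall>k<length xs. u (xs!k) = 0" using assms[unfolded li_def, rule_format, of "\<lambda>k. u (xs!k)"] by blast
  then show False using u(1) by (auto simp: in_set_conv_nth)
qed

lemma span_list: assumes "distinct xs" "y \<in> span (set xs)"
  shows "\<exists>c. y = (\<Sum>k<length xs. c k *\<^sub>R xs!k)"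
proof -
  obtain u where "y = (\<Sum>v\<in>set xs. u v *\<^sub>R v)" using assms(2) span_finite[of "set xs"] by auto
  then have "y = (\<Sum>k<length xs. u (xs!k) *\<^sub>R xs!k)" using sum_set_nth[OF assms(1), of "\<lambda>v. u v *\<^sub>R v"] by simp
  then show ?thesis by (intro exI[of _ "\<lambda>k. u (xs!k)"])
qed

lemma li_span: fixes xs :: "'v::euclidean_space list"
  assumes "li xs" "length xs = DIM('v)" shows "span (set xs) = UNIV"
proof -
  have d: "distinct xs" using assms li_distinct by blast
  have c: "card (set xs) = dim (UNIV::'v set)" using assms d by (simp add: distinct_card)
  have "UNIV \<subseteq> span (set xs)"
    using card_eq_dim[OF subset_UNIV c] li_indep[OF assms(1)] by simp
  then show ?thesis by auto
qed

lemma lorentz_mem: "mat (p+1) (p+1) f \<in> lorentz_group p \<longleftrightarrow>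
  (\<forall>B<p+1. \<forall>C<p+1. (\<Sum>A<p+1. f (A,B) * f (A,C) * eta A A) = eta B C)"
proof -
  have e: "(transpose_mat (mat (p+1) (p+1) f) * eta_mat p * mat (p+1) (p+1) f) $$ (B,C) =
     (\<Sum>A<p+1. f (A,B) * f (A,C) * eta A A)" if "B < p+1" "C < p+1" for B C
  proof -
    have "(transpose_mat (mat (p+1) (p+1) f) * eta_mat p * mat (p+1) (p+1) f) $$ (B,C) =
      (\<Sum>k<p+1. (\<Sum>A<p+1. f (A,B) * eta A k) * f (k,C))"
      using that by (simp add: eta_mat_def scalar_prod_def atLeast0LessThan)
    also have "\<dots> = (\<Sum>k<p+1. (\<Sum>A<p+1. f (A,B) * eta A k * f (k,C)))"
      by (rule sum.cong[OF refl]) (simp only: sum_distrib_right)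
    also have "\<dots> = (\<Sum>A<p+1. (\<Sum>k<p+1. f (A,B) * eta A k * f (k,C)))"
      by (rule sum.swap)
    also have "\<dots> = (\<Sum>A<p+1. f (A,B) * f (A,C) * eta A A)"
    proof (rule sum.cong[OF refl])
      fix A assume A: "A \<in> {..<p+1}"
      have "(\<Sum>k<p+1. f (A,B) * eta A k * f (k,C)) = (\<Sum>k<p+1. if k = A then f (A,B) * eta A A * f (A,C) else 0)"
        by (rule sum.cong[OF refl]) (auto simp: eta_def)
      also have "\<dots> = f (A,B) * f (A,C) * eta A A" using A by simp
      finally show "(\<Sum>k<p+1. f (A,B) * eta A k * f (k,C)) = f (A,B) * f (A,C) * eta A A" .
    qed
    finally show ?thesis .
  qed
  show ?thesis
    unfolding lorentz_group_def
  proof safe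
    fix B C assume "B < p+1" "C < p+1"
      "transpose_mat (mat (p+1) (p+1) f) * eta_mat p * mat (p+1) (p+1) f = eta_mat p"
    then show "(\<Sum>A<p+1. f (A,B) * f (A,C) * eta A A) = eta B C"
      using e[of B C] by (simp add: eta_mat_def)
  next
    assume "\<forall>B<p+1. \<forall>C<p+1. (\<Sum>A<p+1. f (A,B) * f (A,C) * eta A A) = eta B C"
    then show "transpose_mat (mat (p+1) (p+1) f) * eta_mat p * mat (p+1) (p+1) f = eta_mat p"
    proof (intro eq_matI)
      fix i j assume ij: "i < dim_row (eta_mat p)" "j < dim_col (eta_mat p)"
      then have ij': "i < p+1" "j < p+1" by (auto simp: eta_mat_def)
      show "(transpose_mat (mat (p+1) (p+1) f) * eta_mat p * mat (p+1) (p+1) f) $$ (i,j) = eta_mat p $$ (i,j)"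
        unfolding e[OF ij'] using ij' \<open>\<forall>B<p+1. _\<close> by (simp add: eta_mat_def)
    qed (auto simp: eta_mat_def)
  qed auto
qed

lemma orth_mem: "mat m m f \<in> orth_group m \<longleftrightarrow>
  (\<forall>j<m. \<forall>l<m. (\<Sum>i<m. f (i,j) * f (i,l)) = (if j = l then 1 else 0))"
proof -
  have e: "(transpose_mat (mat m m f) * mat m m f) $$ (j,l) = (\<Sum>i<m. f (i,j) * f (i,l))"
    if "j < m" "l < m" for j l
    using that by (simp add: scalar_prod_def atLeast0LessThan)
  show ?thesis unfolding orth_group_def
  proof safe
    fix j l assume "j < m" "l < m" "transpose_mat (mat m m f) * mat m m f = 1\<^sub>m m"
    then show "(\<Sum>i<m. f (i,j) * f (i,l)) = (if j = l then 1 else 0)"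
      using e[of j l] by simp
  next
    assume "\<forall>j<m. \<forall>l<m. (\<Sum>i<m. f (i,j) * f (i,l)) = (if j = l then 1 else 0)"
    then show "transpose_mat (mat m m f) * mat m m f = 1\<^sub>m m"
    proof (intro eq_matI)
      fix i j assume ij: "i < dim_row (1\<^sub>m m)" "j < dim_col (1\<^sub>m m::real mat)"
      then have ij': "i < m" "j < m" by auto
      show "(transpose_mat (mat m m f) * mat m m f) $$ (i,j) = 1\<^sub>m m $$ (i,j)"
        unfolding e[OF ij'] using ij' \<open>\<forall>j<m. _\<close> by simp
    qed auto
  qed auto
qed




definition cs :: "real mat \<Rightarrow> 'v::real_vector list \<Rightarrow> nat \<Rightarrow> 'v" where
  "cs g xs k = (\<Sum>m<length xs. g $$ (m,k) *\<^sub>R xs!m)"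

definition zb :: "nat \<Rightarrow> nat \<Rightarrow> real mat \<Rightarrow> bool" where
  "zb d p g \<longleftrightarrow> (\<forall>A<p+1. \<forall>j<d-(p+1). g $$ (A, p+1+j) = 0)"

lemma cs_comb:
  assumes "length Ts = p+1" "zb (p+1+length Es) p g" "j < length Es"
  shows "cs g (Ts@Es) (p+1+j) = (\<Sum>i<length Es. g $$ (p+1+i,p+1+j) *\<^sub>R Es!i)"
proof -
  have "cs g (Ts@Es) (p+1+j) = (\<Sum>m<p+1. g $$ (m,p+1+j) *\<^sub>R (Ts@Es)!m) + (\<Sum>i<length Es. g $$ (p+1+i,p+1+j) *\<^sub>R (Ts@Es)!(p+1+i))"
    unfolding cs_def length_append assms(1) sum_split_add ..
  also have "(\<Sum>m<p+1. g $$ (m,p+1+j) *\<^sub>R (Ts@Es)!m) = 0"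
    using assms unfolding zb_def by (intro sum.neutral) auto
  finally show ?thesis using assms(1) by (simp add: nth_append)
qed

lemma cs_top:
  assumes "length Ts = p+1" "B < p+1"
  shows "cs g (Ts@Es) B = (\<Sum>A<p+1. g $$ (A, B) *\<^sub>R Ts ! A) + (\<Sum>i<length Es. g $$ (p+1+i, B) *\<^sub>R Es ! i)"
proof -
  have "cs g (Ts@Es) B = (\<Sum>m<p+1. g $$ (m,B) *\<^sub>R (Ts@Es)!m) + (\<Sum>i<length Es. g $$ (p+1+i,B) *\<^sub>R (Ts@Es)!(p+1+i))"
    unfolding cs_def length_append assms(1) sum_split_add ..
  then show ?thesis using assms(1) by (simp add: nth_append)
qed

lemma frame_act_cs:
  assumes "length Ts = p+1" "zb (p+1+length Es) p g"
  shows "frame_act p (Ts,Es) g = (map (cs g (Ts@Es)) [0..<p+1], map (\<lambda>j. cs g (Ts@Es) (p+1+j)) [0..<length Es])"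
  unfolding frame_act_def using cs_comb[OF assms] cs_top[OF assms(1)] by auto

lemma cs_mult:
  assumes "g \<in> carrier_mat d d" "h \<in> carrier_mat d d" "length xs = d" "l < d"
  shows "cs h (map (cs g xs) [0..<d]) l = cs (g*h) xs l"
proof -
  have "cs h (map (cs g xs) [0..<d]) l = (\<Sum>k<d. h $$ (k,l) *\<^sub>R (\<Sum>m<d. g $$ (m,k) *\<^sub>R xs!m))"
    unfolding cs_def using assms by simp
  also have "\<dots> = (\<Sum>k<d. \<Sum>m<d. (g $$ (m,k) * h $$ (k,l)) *\<^sub>R xs!m)"
    by (simp add: scaleR_sum_right mult.commute)
  also have "\<dots> = (\<Sum>m<d. \<Sum>k<d. (g $$ (m,k) * h $$ (k,l)) *\<^sub>R xs!m)"
    by (rule sum.swap)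
  also have "\<dots> = (\<Sum>m<d. (g*h) $$ (m,l) *\<^sub>R xs!m)"
  proof (rule sum.cong[OF refl])
    fix m assume "m \<in> {..<d}"
    then have "(g*h) $$ (m,l) = (\<Sum>k<d. g $$ (m,k) * h $$ (k,l))"
      using assms by (simp add: scalar_prod_def atLeast0LessThan)
    then show "(\<Sum>k<d. (g $$ (m,k) * h $$ (k,l)) *\<^sub>R xs!m) = (g*h) $$ (m,l) *\<^sub>R xs!m"
      by (simp add: scaleR_sum_left)
  qed
  finally show ?thesis unfolding cs_def using assms by simp
qed

lemma cs_one: "k < length xs \<Longrightarrow> cs (1\<^sub>m (length xs)) xs k = xs!k"
proof -
  assume k: "k < length xs"
  have "cs (1\<^sub>m (length xs)) xs k = (\<Sum>m<length xs. if m = k then xs!k else 0)"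
    unfolding cs_def using k by (intro sum.cong) auto
  then show ?thesis using k by simp
qed

lemma zb_mult:
  assumes "g \<in> carrier_mat d d" "h \<in> carrier_mat d d" "zb d p g" "zb d p h"
  shows "zb d p (g*h)"
  unfolding zb_def
proof (intro allI impI)
  fix A j assume Aj: "A < p+1" "j < d-(p+1)"
  have "(g*h) $$ (A,p+1+j) = (\<Sum>k<d. g $$ (A,k) * h $$ (k,p+1+j))"
    using assms Aj by (simp add: scalar_prod_def atLeast0LessThan)
  also have "\<dots> = 0"
  proof (rule sum.neutral, intro ballI)
    fix k assume k: "k \<in> {..<d}"
    show "g $$ (A,k) * h $$ (k,p+1+j) = 0"
    proof (cases "k < p+1")
      case True then show ?thesis using assms(4) Aj unfolding zb_def by simp
    next
      case False
      have k1: "k - (p+1) < d - (p+1)" "p+1+(k-(p+1)) = k" using False k by auto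
      then have "g $$ (A, p+1+(k-(p+1))) = 0" using assms(3) Aj unfolding zb_def by blast
      then show ?thesis using k1 by simp
    qed
  qed
  finally show "(g*h) $$ (A,p+1+j) = 0" .
qed

lemma zb_one: "zb d p (1\<^sub>m d)" unfolding zb_def by auto

locale fr =
  fixes \<tau> \<gamma> :: "'v::euclidean_space \<Rightarrow> 'v \<Rightarrow> real" and p :: nat
  assumes sb: "sym_bilinear \<tau>" and rk: "form_rank \<tau> = p + 1"
    and ls: "lorentzian_sig \<tau> p" and pd: "pos_def_metric_on (kerf \<tau>) \<gamma>"
begin

lemma bil: "bilinear \<tau>" and sym: "\<tau> x y = \<tau> y x" using sb by (auto simp: sym_bilinear_def)

lemma K_sub: "subspace (kerf \<tau>)"
  unfolding subspace_def kerf_def using bil by (auto simp: bilinear_lzero bilinear_ladd bilinear_lmul)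

lemma kerD: "x \<in> kerf \<tau> \<Longrightarrow> \<tau> x y = 0" "x \<in> kerf \<tau> \<Longrightarrow> \<tau> y x = 0"
  by (auto simp: kerf_def sym)

lemma dimK: "dim (kerf \<tau>) + (p+1) = DIM('v)"
  using rk dim_subset_UNIV[of "kerf \<tau>"] unfolding form_rank_def by simp

lemma p_le: "p+1 \<le> DIM('v)" using dimK by simp

lemma tau_sum_l: "\<tau> (\<Sum>i\<in>S. f i) y = (\<Sum>i\<in>S. \<tau> (f i) y)"
proof -
  interpret l: linear "\<lambda>x. \<tau> x y" using bil unfolding bilinear_def by blast
  show ?thesis by (simp add: l.sum)
qed

lemma tau_sum_r: "\<tau> y (\<Sum>i\<in>S. f i) = (\<Sum>i\<in>S. \<tau> y (f i))"
proof -
  have "\<tau> y (\<Sum>i\<in>S. f i) = \<tau> (\<Sum>i\<in>S. f i) y" by (rule sym)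
  also have "\<dots> = (\<Sum>i\<in>S. \<tau> (f i) y)" by (rule tau_sum_l)
  also have "\<dots> = (\<Sum>i\<in>S. \<tau> y (f i))" by (rule sum.cong[OF refl], rule sym)
  finally show ?thesis .
qed

lemma tau_scale_l: "\<tau> (c *\<^sub>R x) y = c * \<tau> x y" using bil by (simp add: bilinear_lmul)
lemma tau_scale_r: "\<tau> y (c *\<^sub>R x) = c * \<tau> y x" using bil by (simp add: bilinear_rmul)

abbreviation "K \<equiv> kerf \<tau>"

lemma g_sym: "x \<in> K \<Longrightarrow> y \<in> K \<Longrightarrow> \<gamma> x y = \<gamma> y x"
  using pd unfolding pos_def_metric_on_def by blast
lemma g_lin: "x \<in> K \<Longrightarrow> y \<in> K \<Longrightarrow> z \<in> K \<Longrightarrow> \<gamma> (a *\<^sub>R x + b *\<^sub>R y) z = a * \<gamma> x z + b * \<gamma> y z"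
  using pd unfolding pos_def_metric_on_def by blast
lemma g_pos: "x \<in> K \<Longrightarrow> x \<noteq> 0 \<Longrightarrow> \<gamma> x x > 0"
  using pd unfolding pos_def_metric_on_def by blast
lemma g_scale: "x \<in> K \<Longrightarrow> z \<in> K \<Longrightarrow> \<gamma> (a *\<^sub>R x) z = a * \<gamma> x z"
  using g_lin[of x x z a 0] by simp
lemma g_add: "x \<in> K \<Longrightarrow> y \<in> K \<Longrightarrow> z \<in> K \<Longrightarrow> \<gamma> (x + y) z = \<gamma> x z + \<gamma> y z"
  using g_lin[of x y z 1 1] by simp
lemma g_zero: "z \<in> K \<Longrightarrow> \<gamma> 0 z = 0"
  using g_scale[of z z 0] by simp

lemma g_sum: "finite S \<Longrightarrow> (\<And>i. i \<in> S \<Longrightarrow> f i \<in> K) \<Longrightarrow> z \<in> K \<Longrightarrow> \<gamma> (\<Sum>i\<in>S. f i) z = (\<Sum>i\<in>S. \<gamma> (f i) z)"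
proof (induction S rule: finite_induct)
  case empty then show ?case by (simp add: g_zero)
next
  case (insert x F)
  have "(\<Sum>i\<in>F. f i) \<in> K" using insert by (intro subspace_sum[OF K_sub]) auto
  then have "\<gamma> (f x + (\<Sum>i\<in>F. f i)) z = \<gamma> (f x) z + \<gamma> (\<Sum>i\<in>F. f i) z"
    using insert.prems by (intro g_add) auto
  moreover have "\<gamma> (sum f F) z = (\<Sum>i\<in>F. \<gamma> (f i) z)" using insert.IH insert.prems by blast
  ultimately show ?case using insert.hyps by simp
qed

lemma g_sum_r: "finite S \<Longrightarrow> (\<And>i. i \<in> S \<Longrightarrow> f i \<in> K) \<Longrightarrow> z \<in> K \<Longrightarrow> \<gamma> z (\<Sum>i\<in>S. f i) = (\<Sum>i\<in>S. \<gamma> z (f i))"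
proof -
  assume a: "finite S" "\<And>i. i \<in> S \<Longrightarrow> f i \<in> K" "z \<in> K"
  have "(\<Sum>i\<in>S. f i) \<in> K" using a by (intro subspace_sum[OF K_sub]) auto
  then have "\<gamma> z (\<Sum>i\<in>S. f i) = \<gamma> (\<Sum>i\<in>S. f i) z" using a g_sym by blast
  also have "\<dots> = (\<Sum>i\<in>S. \<gamma> (f i) z)" using g_sum[OF a] .
  also have "\<dots> = (\<Sum>i\<in>S. \<gamma> z (f i))" using a g_sym by (intro sum.cong) auto
  finally show ?thesis .
qed

end


lemma eta_diag: "eta A A * eta A A = 1" "eta A A \<noteq> 0" by (auto simp: eta_def)

context fr begin

definition ofr :: "'v list \<Rightarrow> 'v list \<Rightarrow> bool" where
  "ofr Ts Es \<longleftrightarrow> length Ts = p + 1 \<and> length Es = DIM('v) - (p+1) \<and>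
     (\<forall>i<length Es. Es ! i \<in> K) \<and>
     (\<forall>A<p+1. \<forall>B<p+1. \<tau> (Ts ! A) (Ts ! B) = eta A B) \<and>
     (\<forall>i<length Es. \<forall>j<length Es. \<gamma> (Es ! i) (Es ! j) = (if i = j then 1 else 0))"

lemma ofr_len: "ofr Ts Es \<Longrightarrow> length (Ts@Es) = DIM('v)"
  using p_le unfolding ofr_def by auto

lemma xs_tau:
  assumes "ofr Ts Es" "m < DIM('v)" "C < p+1"
  shows "\<tau> ((Ts@Es)!m) ((Ts@Es)!C) = (if m = C then eta C C else 0)"
proof (cases "m < p+1")
  case True
  then show ?thesis using assms unfolding ofr_def by (auto simp: nth_append eta_def)
next
  case False
  then have "(Ts@Es)!m \<in> K" using assms unfolding ofr_def by (auto simp: nth_append)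
  then show ?thesis using False assms by (auto simp: kerD)
qed

lemma sum_tau:
  assumes "ofr Ts Es" "C < p+1"
  shows "\<tau> (\<Sum>m<DIM('v). c m *\<^sub>R (Ts@Es)!m) ((Ts@Es)!C) = c C * eta C C"
proof -
  have "\<tau> (\<Sum>m<DIM('v). c m *\<^sub>R (Ts@Es)!m) ((Ts@Es)!C) = (\<Sum>m<DIM('v). c m * \<tau> ((Ts@Es)!m) ((Ts@Es)!C))"
    by (simp add: tau_sum_l tau_scale_l)
  also have "\<dots> = (\<Sum>m<DIM('v). if m = C then c C * eta C C else 0)"
    by (rule sum.cong[OF refl]) (simp add: xs_tau[OF assms(1) _ assms(2)])
  also have "\<dots> = c C * eta C C" using assms(2) p_le by simp
  finally show ?thesis .
qed

lemma lact_tau: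
  assumes "ofr Ts Es"
  shows "\<tau> (\<Sum>m<DIM('v). a m *\<^sub>R (Ts@Es)!m) (\<Sum>m<DIM('v). b m *\<^sub>R (Ts@Es)!m) = (\<Sum>A<p+1. a A * b A * eta A A)"
proof -
  let ?X = "\<Sum>m<DIM('v). a m *\<^sub>R (Ts@Es)!m"
  have n: "DIM('v) = (p+1) + (DIM('v) - (p+1))" using p_le by simp
  have "\<tau> ?X (\<Sum>m<DIM('v). b m *\<^sub>R (Ts@Es)!m) = (\<Sum>m<DIM('v). b m * \<tau> ?X ((Ts@Es)!m))"
    by (simp add: tau_sum_r tau_scale_r)
  also have "\<dots> = (\<Sum>m<DIM('v). if m < p+1 then a m * b m * eta m m else 0)"
  proof (rule sum.cong[OF refl])
    fix m assume m: "m \<in> {..<DIM('v)}"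
    show "b m * \<tau> ?X ((Ts@Es)!m) = (if m < p+1 then a m * b m * eta m m else 0)"
    proof (cases "m < p+1")
      case True then show ?thesis using sum_tau[OF assms True] by simp
    next
      case False
      then have "(Ts@Es)!m \<in> K" using assms m unfolding ofr_def by (auto simp: nth_append)
      then show ?thesis using False by (simp add: kerD)
    qed
  qed
  also have "\<dots> = (\<Sum>A<p+1. a A * b A * eta A A)"
    by (subst n, subst sum_split_add) simp
  finally show ?thesis .
qed

lemma comb_K: "ofr Ts Es \<Longrightarrow> (\<Sum>i<length Es. a i *\<^sub>R Es!i) \<in> K"
  unfolding ofr_def by (intro subspace_sum[OF K_sub] subspace_scale[OF K_sub]) auto

lemma gamma_comb:
  assumes "ofr Ts Es"
  shows "\<gamma> (\<Sum>i<length Es. a i *\<^sub>R Es!i) (\<Sum>i<length Es. b i *\<^sub>R Es!i) = (\<Sum>i<length Es. a i * b i)"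
proof -
  have E: "Es!i \<in> K" if "i < length Es" for i using assms that unfolding ofr_def by auto
  have "\<gamma> (\<Sum>i<length Es. a i *\<^sub>R Es!i) (\<Sum>i<length Es. b i *\<^sub>R Es!i)
     = (\<Sum>i<length Es. \<gamma> (a i *\<^sub>R Es!i) (\<Sum>j<length Es. b j *\<^sub>R Es!j))"
    using E comb_K[OF assms] by (intro g_sum) (auto intro: subspace_scale[OF K_sub])
  also have "\<dots> = (\<Sum>i<length Es. a i * b i)"
  proof (rule sum.cong[OF refl])
    fix i assume i: "i \<in> {..<length Es}"
    have "\<gamma> (Es!i) (\<Sum>j<length Es. b j *\<^sub>R Es!j) = (\<Sum>j<length Es. \<gamma> (Es!i) (b j *\<^sub>R Es!j))"
      using E i by (intro g_sum_r) (auto intro: subspace_scale[OF K_sub])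
    also have "\<dots> = (\<Sum>j<length Es. if j = i then b i else 0)"
    proof (rule sum.cong[OF refl])
      fix j assume j: "j \<in> {..<length Es}"
      have "\<gamma> (Es!i) (b j *\<^sub>R Es!j) = \<gamma> (b j *\<^sub>R Es!j) (Es!i)"
        using E i j by (intro g_sym) (auto intro: subspace_scale[OF K_sub])
      also have "\<dots> = b j * \<gamma> (Es!j) (Es!i)" using E i j by (intro g_scale) auto
      finally show "\<gamma> (Es!i) (b j *\<^sub>R Es!j) = (if j = i then b i else 0)"
        using assms i j unfolding ofr_def by auto
    qed
    also have "\<dots> = b i" using i by simp
    finally have inner: "\<gamma> (Es!i) (\<Sum>j<length Es. b j *\<^sub>R Es!j) = b i" .
    have "\<gamma> (a i *\<^sub>R Es!i) (\<Sum>j<length Es. b j *\<^sub>R Es!j) = a i * \<gamma> (Es!i) (\<Sum>j<length Es. b j *\<^sub>R Es!j)"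
      using E i comb_K[OF assms] by (intro g_scale) auto
    then show "\<gamma> (a i *\<^sub>R Es!i) (\<Sum>j<length Es. b j *\<^sub>R Es!j) = a i * b i" using inner by simp
  qed
  finally show ?thesis .
qed

lemma ofr_li:
  assumes "ofr Ts Es" shows "li (Ts@Es)"
  unfolding li_def
proof (rule allI, rule impI)
  fix c assume c0: "(\<Sum>k<length (Ts@Es). c k *\<^sub>R (Ts@Es)!k) = 0"
  have L: "length (Ts@Es) = DIM('v)" using ofr_len[OF assms] .
  have lt: "length Ts = p+1" and lE: "length Es = DIM('v) - (p+1)" using assms unfolding ofr_def by auto
  have top: "c C = 0" if "C < p+1" for C
  proof -
    have "c C * eta C C = 0" using sum_tau[OF assms that, of c] c0 L kerD(1)[OF subspace_0[OF K_sub]]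
      by simp
    then show ?thesis using eta_diag by simp
  qed
  have n: "DIM('v) = (p+1) + length Es" using p_le lE by simp
  have "(\<Sum>k<length (Ts@Es). c k *\<^sub>R (Ts@Es)!k) = (\<Sum>i<length Es. c (p+1+i) *\<^sub>R Es!i)"
    unfolding L by (subst n, subst sum_split_add) (simp add: top lt nth_append)
  then have cE: "(\<Sum>i<length Es. c (p+1+i) *\<^sub>R Es!i) = 0" using c0 by simp
  have bot: "c (p+1+l) = 0" if "l < length Es" for l
  proof -
    have "\<gamma> (\<Sum>i<length Es. c (p+1+i) *\<^sub>R Es!i) (\<Sum>i<length Es. (if i = l then 1 else 0) *\<^sub>R Es!i)
       = (\<Sum>i<length Es. c (p+1+i) * (if i = l then 1 else 0))" by (rule gamma_comb[OF assms])
    also have "\<dots> = c (p+1+l)" using that by (simp add: if_distrib cong: if_cong)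
    finally show ?thesis using cE g_zero comb_K[OF assms] by simp
  qed
  show "\<forall>k<length (Ts@Es). c k = 0"
  proof (intro allI impI)
    fix k assume "k < length (Ts@Es)"
    then show "c k = 0" using top bot[of "k-(p+1)"] L n by (cases "k < p+1") auto
  qed
qed

lemma ofr_frames: assumes o: "ofr Ts Es" shows "(Ts,Es) \<in> frames_p p \<tau> \<gamma>"
proof -
  have l: "li (Ts@Es)" by (rule ofr_li[OF o])
  have "distinct (Ts@Es)" "independent (set (Ts@Es))" "span (set (Ts@Es)) = UNIV"
    using li_distinct[OF l] li_indep[OF l] li_span[OF l ofr_len[OF o]] by auto
  then show ?thesis using o unfolding frames_p_def ofr_def mem_Collect_eq case_prod_conv by blast
qed

lemma frames_ofr: "(Ts,Es) \<in> frames_p p \<tau> \<gamma> \<Longrightarrow> ofr Ts Es"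
  unfolding frames_p_def ofr_def by auto

end


declare upt_Suc[simp del]

context fr begin

lemma Gp_D:
  assumes "g \<in> Gp DIM('v) p"
  shows "g \<in> carrier_mat DIM('v) DIM('v)" "zb DIM('v) p g"
    "\<forall>B<p+1. \<forall>C<p+1. (\<Sum>A<p+1. g $$ (A,B) * g $$ (A,C) * eta A A) = eta B C"
    "\<forall>j<DIM('v)-(p+1). \<forall>l<DIM('v)-(p+1). (\<Sum>i<DIM('v)-(p+1). g $$ (p+1+i,p+1+j) * g $$ (p+1+i,p+1+l)) = (if j = l then 1 else 0)"
proof -
  show "g \<in> carrier_mat DIM('v) DIM('v)" "zb DIM('v) p g" using assms unfolding Gp_def zb_def by auto
  have "mat (p+1) (p+1) (\<lambda>(A,B). g $$ (A,B)) \<in> lorentz_group p" using assms unfolding Gp_def by auto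
  then show "\<forall>B<p+1. \<forall>C<p+1. (\<Sum>A<p+1. g $$ (A,B) * g $$ (A,C) * eta A A) = eta B C"
    unfolding lorentz_mem by simp
  have "mat (DIM('v)-(p+1)) (DIM('v)-(p+1)) (\<lambda>(i,j). g $$ (p+1+i, p+1+j)) \<in> orth_group (DIM('v)-(p+1))"
    using assms unfolding Gp_def by auto
  then show "\<forall>j<DIM('v)-(p+1). \<forall>l<DIM('v)-(p+1). (\<Sum>i<DIM('v)-(p+1). g $$ (p+1+i,p+1+j) * g $$ (p+1+i,p+1+l)) = (if j = l then 1 else 0)"
    unfolding orth_mem by simp
qed

lemma ofr_E: assumes "ofr Ts Es"
  shows "length Ts = p+1" "length Es = DIM('v) - (p+1)" "p+1+length Es = DIM('v)" "length (Ts@Es) = DIM('v)"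
  using assms p_le unfolding ofr_def by auto

lemma act_form:
  assumes o: "ofr Ts Es" and z: "zb DIM('v) p g"
  shows "frame_act p (Ts,Es) g = (map (cs g (Ts@Es)) [0..<p+1], map (\<lambda>j. cs g (Ts@Es) (p+1+j)) [0..<length Es])"
  using frame_act_cs[of Ts p Es g] ofr_E[OF o] z by simp

lemma cs_eq: "ofr Ts Es \<Longrightarrow> cs g (Ts@Es) k = (\<Sum>m<DIM('v). g $$ (m,k) *\<^sub>R (Ts@Es)!m)"
  unfolding cs_def using ofr_E by simp

lemma act_ofr:
  assumes o: "ofr Ts Es" and g: "g \<in> Gp DIM('v) p"
  shows "ofr (map (cs g (Ts@Es)) [0..<p+1]) (map (\<lambda>j. cs g (Ts@Es) (p+1+j)) [0..<length Es])"
proof -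
  note E = ofr_E[OF o] and G = Gp_D[OF g]
  have z: "zb (p+1+length Es) p g" using G(2) E by simp
  have K: "cs g (Ts@Es) (p+1+j) \<in> K" if "j < length Es" for j
    using cs_comb[OF E(1) z that] comb_K[OF o] by simp
  have T: "\<tau> (cs g (Ts@Es) B) (cs g (Ts@Es) C) = eta B C" if "B < p+1" "C < p+1" for B C
    using lact_tau[OF o] G(3) that by (simp add: cs_eq[OF o])
  have Ga: "\<gamma> (cs g (Ts@Es) (p+1+j)) (cs g (Ts@Es) (p+1+l)) = (if j = l then 1 else 0)"
    if "j < length Es" "l < length Es" for j l
    using cs_comb[OF E(1) z that(1)] cs_comb[OF E(1) z that(2)] gamma_comb[OF o] G(4) that E(2) by simp
  show ?thesis unfolding ofr_def using E K T Ga by (simp del: upt_Suc)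
qed

lemma act_mem: "F \<in> frames_p p \<tau> \<gamma> \<Longrightarrow> g \<in> Gp DIM('v) p \<Longrightarrow> frame_act p F g \<in> frames_p p \<tau> \<gamma>"
  using act_form act_ofr frames_ofr ofr_frames Gp_D(2) by (cases F) auto

lemma act_one:
  assumes "F \<in> frames_p p \<tau> \<gamma>" shows "frame_act p F (1\<^sub>m DIM('v)) = F"
proof (cases F)
  case (Pair Ts Es)
  then have o: "ofr Ts Es" using assms frames_ofr by simp
  note E = ofr_E[OF o]
  have c: "cs (1\<^sub>m DIM('v)) (Ts@Es) k = (Ts@Es)!k" if "k < DIM('v)" for k
    using cs_one[of k "Ts@Es"] E that by simp
  have "map (cs (1\<^sub>m DIM('v)) (Ts@Es)) [0..<p+1] = Ts"
    by (rule nth_equalityI) (use E c p_le in \<open>auto simp: nth_append\<close>)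
  moreover have "map (\<lambda>j. cs (1\<^sub>m DIM('v)) (Ts@Es) (p+1+j)) [0..<length Es] = Es"
    by (rule nth_equalityI) (use E c in \<open>auto simp: nth_append\<close>)
  ultimately show ?thesis using act_form[OF o zb_one] Pair by simp
qed

lemma act_comp:
  assumes F: "F \<in> frames_p p \<tau> \<gamma>" and g: "g \<in> Gp DIM('v) p" and h: "h \<in> Gp DIM('v) p"
  shows "frame_act p (frame_act p F g) h = frame_act p F (g * h)"
proof (cases F)
  case (Pair Ts Es)
  then have o: "ofr Ts Es" using assms frames_ofr by simp
  note E = ofr_E[OF o] and G = Gp_D[OF g] and H = Gp_D[OF h]
  define Ts' where "Ts' = map (cs g (Ts@Es)) [0..<p+1]"
  define Es' where "Es' = map (\<lambda>j. cs g (Ts@Es) (p+1+j)) [0..<length Es]"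
  have o': "ofr Ts' Es'" unfolding Ts'_def Es'_def by (rule act_ofr[OF o g])
  have fa: "frame_act p F g = (Ts', Es')" using act_form[OF o G(2)] Pair Ts'_def Es'_def by simp
  have xs': "Ts'@Es' = map (cs g (Ts@Es)) [0..<DIM('v)]"
    by (rule nth_equalityI) (use E in \<open>auto simp: Ts'_def Es'_def nth_append\<close>)
  have zgh: "zb DIM('v) p (g*h)" by (rule zb_mult[OF G(1) H(1) G(2) H(2)])
  have m: "cs h (Ts'@Es') l = cs (g*h) (Ts@Es) l" if "l < DIM('v)" for l
    unfolding xs' by (rule cs_mult[OF G(1) H(1) E(4) that])
  have "frame_act p (Ts',Es') h = (map (cs h (Ts'@Es')) [0..<p+1], map (\<lambda>j. cs h (Ts'@Es') (p+1+j)) [0..<length Es'])"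
    by (rule act_form[OF o' H(2)])
  also have "\<dots> = (map (cs (g*h) (Ts@Es)) [0..<p+1], map (\<lambda>j. cs (g*h) (Ts@Es) (p+1+j)) [0..<length Es])"
    using m E p_le by (auto simp: Es'_def)
  also have "\<dots> = frame_act p (Ts,Es) (g*h)" using act_form[OF o zgh] by simp
  finally show ?thesis using fa Pair by simp
qed

lemma act_free:
  assumes F: "F \<in> frames_p p \<tau> \<gamma>" and g: "g \<in> Gp DIM('v) p" and eq: "frame_act p F g = F"
  shows "g = 1\<^sub>m DIM('v)"
proof (cases F)
  case (Pair Ts Es)
  then have o: "ofr Ts Es" using assms frames_ofr by simp
  note E = ofr_E[OF o] and G = Gp_D[OF g]
  have e1: "map (cs g (Ts@Es)) [0..<p+1] = Ts" and e2: "map (\<lambda>j. cs g (Ts@Es) (p+1+j)) [0..<length Es] = Es"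
    using act_form[OF o G(2)] eq Pair by auto
  have c: "cs g (Ts@Es) k = (Ts@Es)!k" if "k < DIM('v)" for k
  proof (cases "k < p+1")
    case True
    then show ?thesis using arg_cong[OF e1, of "\<lambda>l. l!k"] E by (simp add: nth_append)
  next
    case False
    then have "k - (p+1) < length Es" using that E by simp
    then show ?thesis using arg_cong[OF e2, of "\<lambda>l. l!(k-(p+1))"] E False by (simp add: nth_append)
  qed
  have l: "li (Ts@Es)" by (rule ofr_li[OF o])
  show ?thesis
  proof (rule eq_matI)
    fix m k assume mk: "m < dim_row (1\<^sub>m DIM('v))" "k < dim_col (1\<^sub>m DIM('v) :: real mat)"
    then have mk': "m < DIM('v)" "k < DIM('v)" by auto
    define a where "a = (\<lambda>i. g $$ (i,k) - (if i = k then 1 else 0))"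
    have "(\<Sum>i<DIM('v). a i *\<^sub>R (Ts@Es)!i) = (\<Sum>i<DIM('v). g $$ (i,k) *\<^sub>R (Ts@Es)!i - (if i = k then (Ts@Es)!k else 0))"
      by (rule sum.cong[OF refl]) (auto simp: a_def scaleR_diff_left)
    also have "\<dots> = cs g (Ts@Es) k - (\<Sum>i<DIM('v). (if i = k then (Ts@Es)!k else 0))"
      unfolding cs_eq[OF o] by (rule sum_subtractf)
    also have "\<dots> = 0" using c mk' by simp
    finally have "a m = 0" using l mk' E(4) unfolding li_def by metis
    then show "g $$ (m,k) = 1\<^sub>m DIM('v) $$ (m,k)" using mk' by (simp add: a_def)
  qed (use G(1) in auto)
qed

end


declare upt_Suc[simp del]

context fr begin

lemma act_trans:
  assumes F: "F \<in> frames_p p \<tau> \<gamma>" and F': "F' \<in> frames_p p \<tau> \<gamma>"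
  shows "\<exists>g\<in>Gp DIM('v) p. frame_act p F g = F'"
proof -
  obtain Ts Es where P: "F = (Ts,Es)" by (cases F)
  obtain Ts' Es' where P': "F' = (Ts',Es')" by (cases F')
  have o: "ofr Ts Es" using F P frames_ofr by simp
  have o': "ofr Ts' Es'" using F' P' frames_ofr by simp
  note E = ofr_E[OF o] and E' = ofr_E[OF o']
  have d: "distinct (Ts@Es)" and sp: "span (set (Ts@Es)) = UNIV"
    using F P unfolding frames_p_def by auto
  have "\<forall>k. \<exists>c. k < DIM('v) \<longrightarrow> (Ts'@Es')!k = (\<Sum>m<DIM('v). c m *\<^sub>R (Ts@Es)!m)"
    using span_list[OF d] sp E(4) by auto
  then obtain Cf where Cf: "\<And>k. k < DIM('v) \<Longrightarrow> (Ts'@Es')!k = (\<Sum>m<DIM('v). Cf k m *\<^sub>R (Ts@Es)!m)"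
    by metis
  define g where "g = mat DIM('v) DIM('v) (\<lambda>(m,k). Cf k m)"
  have gc: "g \<in> carrier_mat DIM('v) DIM('v)" unfolding g_def by simp
  have csg: "cs g (Ts@Es) k = (Ts'@Es')!k" if "k < DIM('v)" for k
    unfolding cs_eq[OF o] Cf[OF that] g_def using that by (intro sum.cong) auto
  have z: "zb DIM('v) p g" unfolding zb_def
  proof (intro allI impI)
    fix A j assume Aj: "A < p+1" "j < DIM('v) - (p+1)"
    have "(Ts'@Es')!(p+1+j) = Es'!j" using E' by (simp add: nth_append)
    then have "(Ts'@Es')!(p+1+j) \<in> K" using o' Aj E' unfolding ofr_def by auto
    then have "0 = \<tau> ((Ts'@Es')!(p+1+j)) ((Ts@Es)!A)" by (simp add: kerD)
    also have "(Ts'@Es')!(p+1+j) = (\<Sum>m<DIM('v). Cf (p+1+j) m *\<^sub>R (Ts@Es)!m)" using Aj by (intro Cf) auto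
    also have "\<tau> (\<Sum>m<DIM('v). Cf (p+1+j) m *\<^sub>R (Ts@Es)!m) ((Ts@Es)!A) = Cf (p+1+j) A * eta A A"
      by (rule sum_tau[OF o Aj(1)])
    finally have "Cf (p+1+j) A = 0" using eta_diag by simp
    then show "g $$ (A, p+1+j) = 0" unfolding g_def using Aj by simp
  qed
  have L: "(\<Sum>A<p+1. g $$ (A,B) * g $$ (A,C) * eta A A) = eta B C" if "B < p+1" "C < p+1" for B C
  proof -
    have "(\<Sum>A<p+1. g $$ (A,B) * g $$ (A,C) * eta A A) = \<tau> (cs g (Ts@Es) B) (cs g (Ts@Es) C)"
      unfolding cs_eq[OF o] by (rule lact_tau[OF o, symmetric])
    also have "\<dots> = \<tau> (Ts'!B) (Ts'!C)" using csg that E E' p_le by (simp add: nth_append)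
    also have "\<dots> = eta B C" using o' that unfolding ofr_def by auto
    finally show ?thesis .
  qed
  have z': "zb (p+1+length Es) p g" using z E by simp
  have O: "(\<Sum>i<DIM('v)-(p+1). g $$ (p+1+i,p+1+j) * g $$ (p+1+i,p+1+l)) = (if j = l then 1 else 0)"
    if "j < DIM('v)-(p+1)" "l < DIM('v)-(p+1)" for j l
  proof -
    have jl: "j < length Es" "l < length Es" using that E by auto
    have "(\<Sum>i<DIM('v)-(p+1). g $$ (p+1+i,p+1+j) * g $$ (p+1+i,p+1+l)) = \<gamma> (cs g (Ts@Es) (p+1+j)) (cs g (Ts@Es) (p+1+l))"
      unfolding cs_comb[OF E(1) z' jl(1)] cs_comb[OF E(1) z' jl(2)] gamma_comb[OF o] by (simp add: E(2))
    also have "\<dots> = \<gamma> (Es'!j) (Es'!l)" using csg that E E' by (simp add: nth_append)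
    also have "\<dots> = (if j = l then 1 else 0)" using o' that E' unfolding ofr_def by auto
    finally show ?thesis .
  qed
  have gG: "g \<in> Gp DIM('v) p"
    unfolding Gp_def lorentz_mem orth_mem using gc p_le z L O unfolding zb_def by auto
  have "frame_act p F g = (map (cs g (Ts@Es)) [0..<p+1], map (\<lambda>j. cs g (Ts@Es) (p+1+j)) [0..<length Es])"
    using act_form[OF o z] P by simp
  also have "map (cs g (Ts@Es)) [0..<p+1] = Ts'"
    by (rule nth_equalityI) (use E E' csg p_le in \<open>auto simp: nth_append\<close>)
  also have "map (\<lambda>j. cs g (Ts@Es) (p+1+j)) [0..<length Es] = Es'"
    by (rule nth_equalityI) (use E E' csg in \<open>auto simp: nth_append\<close>)
  finally show ?thesis using gG P' by blast
qed

lemma li_of_tau: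
  assumes "\<forall>i<length xs. \<forall>j<length xs. i \<noteq> j \<longrightarrow> \<tau> (xs!i) (xs!j) = 0"
    "\<forall>i<length xs. \<tau> (xs!i) (xs!i) \<noteq> 0"
  shows "li xs"
  unfolding li_def
proof (rule allI, rule impI, rule allI, rule impI)
  fix c j assume c0: "(\<Sum>k<length xs. c k *\<^sub>R xs!k) = 0" and j: "j < length xs"
  have "0 = \<tau> (\<Sum>k<length xs. c k *\<^sub>R xs!k) (xs!j)" using c0 kerD(1)[OF subspace_0[OF K_sub]] by simp
  also have "\<dots> = (\<Sum>k<length xs. c k * \<tau> (xs!k) (xs!j))" by (simp add: tau_sum_l tau_scale_l)
  also have "\<dots> = (\<Sum>k<length xs. if k = j then c j * \<tau> (xs!j) (xs!j) else 0)"
    using assms(1) j by (intro sum.cong) auto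
  also have "\<dots> = c j * \<tau> (xs!j) (xs!j)" using j by simp
  finally show "c j = 0" using assms(2) j by simp
qed

lemma dim_union_list: fixes S :: "'v set" shows "dim (S \<union> set ts) \<le> dim S + length ts"
proof (induction ts)
  case Nil then show ?case by simp
next
  case (Cons x ts)
  have "dim (S \<union> set (x#ts)) = dim (insert x (S \<union> set ts))" by simp
  also have "\<dots> \<le> dim (S \<union> set ts) + 1" using dim_insert[of x "S \<union> set ts"] by (simp split: if_splits)
  finally show ?case using Cons by simp
qed

end


declare upt_Suc[simp del]

context fr begin

definition negset :: "nat set" where
  "negset = {dim S | S. subspace S \<and> (\<forall>x\<in>S. x \<noteq> 0 \<longrightarrow> \<tau> x x < 0)}"

lemma negset_fin: "finite negset"
proof -
  have "negset \<subseteq> {..DIM('v)}" unfolding negset_def using dim_subset_UNIV by auto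
  then show ?thesis using finite_subset by blast
qed

lemma negset_Max: "Max negset = 1"
  using ls unfolding lorentzian_sig_def neg_index_def negset_def by simp

lemma dim_zero_le: fixes S :: "'v set" assumes "\<forall>x\<in>S. x = 0" shows "dim S = 0"
proof -
  have "S \<subseteq> span {}" using assms by auto
  then have "dim S \<le> card ({}::'v set)" by (intro dim_le_card) auto
  then show ?thesis by simp
qed

lemma neg_vec: "\<exists>x. \<tau> x x < 0"
proof (rule ccontr)
  assume "\<not> (\<exists>x. \<tau> x x < 0)"
  then have nn: "\<tau> x x \<ge> 0" for x by (simp add: not_less)
  have "negset \<subseteq> {0}" unfolding negset_def
  proof safe
    fix S :: "'v set" assume "\<forall>x\<in>S. x \<noteq> 0 \<longrightarrow> \<tau> x x < 0"
    then have "\<forall>x\<in>S. x = 0" using nn by (meson not_less)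
    then show "dim S = 0" by (rule dim_zero_le)
  qed
  moreover have "0 \<in> negset" unfolding negset_def
    by (rule CollectI, rule exI[of _ "{0}"]) (auto intro: dim_zero_le simp: subspace_def)
  ultimately have "negset = {0}" by blast
  then show False using negset_Max by simp
qed

lemma no_neg2:
  assumes "\<tau> a a = -1" "\<tau> b b = -1" "\<tau> a b = 0"
  shows False
proof -
  have ba: "\<tau> b a = 0" using assms(3) sym by metis
  have l: "li [a,b]"
  proof (rule li_of_tau)
    show "\<forall>i<length [a,b]. \<forall>j<length [a,b]. i \<noteq> j \<longrightarrow> \<tau> ([a,b]!i) ([a,b]!j) = 0"
      using assms ba by (auto simp: less_Suc_eq)
    show "\<forall>i<length [a,b]. \<tau> ([a,b]!i) ([a,b]!i) \<noteq> 0"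
      using assms by (auto simp: less_Suc_eq)
  qed
  have d: "distinct [a,b]" by (rule li_distinct[OF l])
  have ind: "independent {a,b}" using li_indep[OF l] by simp
  have dimS: "dim (span {a,b}) = 2" using dim_span_eq_card_independent[OF ind] d by simp
  have neg: "\<forall>x\<in>span {a,b}. x \<noteq> 0 \<longrightarrow> \<tau> x x < 0"
  proof (intro ballI impI)
    fix x assume x: "x \<in> span {a,b}" "x \<noteq> 0"
    obtain c where c: "x = (\<Sum>k<length [a,b]. c k *\<^sub>R [a,b]!k)"
      using span_list[OF d, of x] x by auto
    then have xc: "x = c 0 *\<^sub>R a + c 1 *\<^sub>R b" by (simp add: numeral_2_eq_2)
    have "\<tau> x x = c 0 * c 0 * \<tau> a a + c 0 * c 1 * \<tau> a b + c 1 * c 0 * \<tau> b a + c 1 * c 1 * \<tau> b b"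
      unfolding xc using bil
      by (simp add: bilinear_ladd bilinear_radd tau_scale_l tau_scale_r algebra_simps)
    also have "\<dots> = - (c 0 * c 0 + c 1 * c 1)" using assms ba by simp
    finally have tx: "\<tau> x x = - (c 0 * c 0 + c 1 * c 1)" .
    have "c 0 \<noteq> 0 \<or> c 1 \<noteq> 0" using x(2) xc by auto
    then have "c 0 * c 0 + c 1 * c 1 > 0"
      by (simp add: sum_squares_gt_zero_iff)
    then show "\<tau> x x < 0" using tx by simp
  qed
  have "2 \<in> negset" unfolding negset_def using dimS neg by (intro CollectI exI[of _ "span {a,b}"]) auto
  then have "2 \<le> Max negset" using negset_fin by (rule Max_ge[rotated])
  then show False using negset_Max by simp
qed

definition tlist :: "'v list \<Rightarrow> bool" where
  "tlist ts \<longleftrightarrow> (\<forall>i<length ts. \<forall>j<length ts. i \<noteq> j \<longrightarrow> \<tau> (ts!i) (ts!j) = 0) \<and>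
     (\<forall>i<length ts. \<tau> (ts!i) (ts!i) = 1 \<or> \<tau> (ts!i) (ts!i) = -1)"

lemma ex_w:
  assumes t: "tlist ts" and n: "length ts < p+1"
  shows "\<exists>w. (\<forall>i<length ts. \<tau> w (ts!i) = 0) \<and> \<tau> w w \<noteq> 0"
proof (rule ccontr)
  assume "\<not> ?thesis"
  then have H: "\<tau> w w = 0" if "\<forall>i<length ts. \<tau> w (ts!i) = 0" for w using that by blast
  define e where "e i = \<tau> (ts!i) (ts!i)" for i
  have ee: "e i * e i = 1" if "i < length ts" for i using t that unfolding tlist_def e_def by auto
  define P where "P v = v - (\<Sum>i<length ts. (e i * \<tau> v (ts!i)) *\<^sub>R ts!i)" for v
  define W where "W = {w. \<forall>i<length ts. \<tau> w (ts!i) = 0}"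
  have PW: "P v \<in> W" for v
  proof -
    have "\<tau> (P v) (ts!j) = 0" if j: "j < length ts" for j
    proof -
      have "\<tau> (P v) (ts!j) = \<tau> v (ts!j) - (\<Sum>i<length ts. e i * \<tau> v (ts!i) * \<tau> (ts!i) (ts!j))"
        unfolding P_def using bil by (simp add: bilinear_lsub tau_sum_l tau_scale_l)
      also have "(\<Sum>i<length ts. e i * \<tau> v (ts!i) * \<tau> (ts!i) (ts!j)) = (\<Sum>i<length ts. if i = j then \<tau> v (ts!j) else 0)"
      proof (rule sum.cong[OF refl])
        fix i assume i: "i \<in> {..<length ts}"
        show "e i * \<tau> v (ts!i) * \<tau> (ts!i) (ts!j) = (if i = j then \<tau> v (ts!j) else 0)"
        proof (cases "i = j")
          case True then show ?thesis using ee[OF j] unfolding e_def by (simp add: algebra_simps)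
        next
          case False then show ?thesis using t i j unfolding tlist_def by auto
        qed
      qed
      also have "\<dots> = \<tau> v (ts!j)" using j by simp
      finally show ?thesis by simp
    qed
    then show ?thesis unfolding W_def by auto
  qed
  have Wadd: "w + w' \<in> W" if "w \<in> W" "w' \<in> W" for w w'
    using that bil unfolding W_def by (simp add: bilinear_ladd)
  have Wo: "\<tau> w w' = 0" if "w \<in> W" "w' \<in> W" for w w'
  proof -
    have "0 = \<tau> (w+w') (w+w')" using H Wadd[OF that] unfolding W_def by auto
    also have "\<dots> = \<tau> w w + \<tau> w w' + \<tau> w' w + \<tau> w' w'" using bil
      by (simp add: bilinear_ladd bilinear_radd)
    also have "\<dots> = 2 * \<tau> w w'" using H that sym[of w' w] unfolding W_def by auto
    finally show ?thesis by simp
  qed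
  have WK: "w \<in> K" if w: "w \<in> W" for w
    unfolding kerf_def
  proof (rule CollectI, rule allI)
    fix v
    have v: "v = P v + (\<Sum>i<length ts. (e i * \<tau> v (ts!i)) *\<^sub>R ts!i)" unfolding P_def by simp
    have "\<tau> w v = \<tau> w (P v) + (\<Sum>i<length ts. (e i * \<tau> v (ts!i)) * \<tau> w (ts!i))"
      by (subst v) (simp add: bil bilinear_radd tau_sum_r tau_scale_r)
    also have "\<dots> = 0" using Wo[OF w PW] w unfolding W_def by simp
    finally show "\<tau> w v = 0" .
  qed
  have "UNIV \<subseteq> span (K \<union> set ts)"
  proof
    fix v :: 'v
    have v: "v = P v + (\<Sum>i<length ts. (e i * \<tau> v (ts!i)) *\<^sub>R ts!i)" unfolding P_def by simp
    have "P v \<in> span (K \<union> set ts)" using WK[OF PW] by (intro span_base) auto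
    moreover have "(\<Sum>i<length ts. (e i * \<tau> v (ts!i)) *\<^sub>R ts!i) \<in> span (K \<union> set ts)"
      by (intro span_sum span_scale span_base) auto
    ultimately show "v \<in> span (K \<union> set ts)" by (subst v) (rule span_add)
  qed
  then have "dim (UNIV::'v set) \<le> dim (K \<union> set ts)" using dim_subset dim_span by metis
  also have "\<dots> \<le> dim K + length ts" by (rule dim_union_list)
  finally show False using dimK n by simp
qed

lemma build_ts:
  assumes x0: "\<tau> x0 x0 = -1"
  shows "1 \<le> n \<Longrightarrow> n \<le> p+1 \<Longrightarrow> \<exists>ts. length ts = n \<and> ts!0 = x0 \<and> tlist ts"
proof (induction n)
  case 0 then show ?case by simp
next
  case (Suc n)
  show ?case
  proof (cases "n = 0")
    case True
    then show ?thesis using x0 by (intro exI[of _ "[x0]"]) (auto simp: tlist_def)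
  next
    case False
    then obtain ts where ts: "length ts = n" "ts!0 = x0" "tlist ts" using Suc by auto
    obtain w where w: "\<forall>i<length ts. \<tau> w (ts!i) = 0" "\<tau> w w \<noteq> 0" using ex_w[OF ts(3)] ts(1) Suc by auto
    define c where "c = 1 / sqrt \<bar>\<tau> w w\<bar>"
    define t where "t = c *\<^sub>R w"
    have cc: "c * c * \<bar>\<tau> w w\<bar> = 1" unfolding c_def using w(2)
      by (simp add: field_simps)
    have tt: "\<tau> t t = 1 \<or> \<tau> t t = -1"
    proof -
      have "\<tau> t t = c * c * \<tau> w w" unfolding t_def by (simp add: tau_scale_l tau_scale_r)
      then show ?thesis using cc by (cases "\<tau> w w \<ge> 0") (auto simp: abs_if)
    qed
    have to: "\<tau> t (ts!i) = 0" "\<tau> (ts!i) t = 0" if "i < n" for i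
      using w ts(1) that unfolding t_def by (auto simp: tau_scale_l tau_scale_r sym[of "ts!i" w])
    have "tlist (ts @ [t])"
      unfolding tlist_def using ts(1,3) tt to unfolding tlist_def
      by (auto simp: nth_append less_Suc_eq)
    moreover have "(ts @ [t])!0 = x0" using ts False by (simp add: nth_append)
    ultimately show ?thesis using ts(1) by (intro exI[of _ "ts @ [t]"]) auto
  qed
qed

lemma build_es:
  "n \<le> dim K \<Longrightarrow> \<exists>es. length es = n \<and> (\<forall>i<n. es!i \<in> K) \<and> (\<forall>i<n. \<forall>j<n. \<gamma> (es!i) (es!j) = (if i = j then 1 else 0))"
proof (induction n)
  case 0 then show ?case by simp
next
  case (Suc n)
  then obtain es where es: "length es = n" "\<forall>i<n. es!i \<in> K" "\<forall>i<n. \<forall>j<n. \<gamma> (es!i) (es!j) = (if i = j then 1 else 0)"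
    by auto
  have "\<not> K \<subseteq> span (set es)"
  proof
    assume "K \<subseteq> span (set es)"
    then have "dim K \<le> card (set es)" by (intro dim_le_card) auto
    also have "\<dots> \<le> n" using es(1) card_length by metis
    finally show False using Suc by simp
  qed
  then obtain x where x: "x \<in> K" "x \<notin> span (set es)" by auto
  define s where "s = (\<Sum>i<n. \<gamma> x (es!i) *\<^sub>R es!i)"
  have sK: "s \<in> K" unfolding s_def using es by (intro subspace_sum[OF K_sub] subspace_scale[OF K_sub]) auto
  have ss: "s \<in> span (set es)" unfolding s_def using es(1) by (intro span_sum span_scale span_base) auto
  define y where "y = x - s"
  have yK: "y \<in> K" unfolding y_def using subspace_diff[OF K_sub x(1) sK] .
  have y0: "y \<noteq> 0" using x ss unfolding y_def by auto
  have yo: "\<gamma> y (es!j) = 0" if j: "j < n" for j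
  proof -
    have ej: "es!j \<in> K" using es j by auto
    have "\<gamma> y (es!j) = \<gamma> (1 *\<^sub>R x + (-1) *\<^sub>R s) (es!j)" unfolding y_def by simp
    also have "\<dots> = \<gamma> x (es!j) - \<gamma> s (es!j)" using g_lin[OF x(1) sK ej, of 1 "-1"] by simp
    also have "\<gamma> s (es!j) = (\<Sum>i<n. \<gamma> (\<gamma> x (es!i) *\<^sub>R es!i) (es!j))"
      unfolding s_def using es ej by (intro g_sum) (auto intro: subspace_scale[OF K_sub])
    also have "\<dots> = (\<Sum>i<n. if i = j then \<gamma> x (es!j) else 0)"
    proof (rule sum.cong[OF refl])
      fix i assume i: "i \<in> {..<n}"
      have "\<gamma> (\<gamma> x (es!i) *\<^sub>R es!i) (es!j) = \<gamma> x (es!i) * \<gamma> (es!i) (es!j)"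
        using es i ej by (intro g_scale) auto
      then show "\<gamma> (\<gamma> x (es!i) *\<^sub>R es!i) (es!j) = (if i = j then \<gamma> x (es!j) else 0)"
        using es i j by auto
    qed
    also have "\<dots> = \<gamma> x (es!j)" using j by simp
    finally show ?thesis by simp
  qed
  define c where "c = 1 / sqrt (\<gamma> y y)"
  have gy: "\<gamma> y y > 0" by (rule g_pos[OF yK y0])
  define e where "e = c *\<^sub>R y"
  have eK: "e \<in> K" unfolding e_def using yK by (rule subspace_scale[OF K_sub])
  have ee: "\<gamma> e e = 1"
  proof -
    have "\<gamma> e e = c * \<gamma> y e" unfolding e_def using yK eK by (intro g_scale) (auto simp: e_def)
    also have "\<gamma> y e = \<gamma> e y" using yK eK g_sym by auto
    also have "\<gamma> e y = c * \<gamma> y y" unfolding e_def using yK by (intro g_scale) auto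
    finally show ?thesis unfolding c_def using gy by (simp add: field_simps)
  qed
  have eo: "\<gamma> e (es!j) = 0" "\<gamma> (es!j) e = 0" if j: "j < n" for j
  proof -
    have ej: "es!j \<in> K" using es j by auto
    show "\<gamma> e (es!j) = 0" unfolding e_def using g_scale[OF yK ej] yo[OF j] by simp
    then show "\<gamma> (es!j) e = 0" using g_sym[OF ej eK] by simp
  qed
  have "length (es@[e]) = Suc n" using es by simp
  moreover have "\<forall>i<Suc n. (es@[e])!i \<in> K" using es eK by (auto simp: nth_append less_Suc_eq)
  moreover have "\<forall>i<Suc n. \<forall>j<Suc n. \<gamma> ((es@[e])!i) ((es@[e])!j) = (if i = j then 1 else 0)"
    using es ee eo by (auto simp: nth_append less_Suc_eq)
  ultimately show ?case by blast
qed

lemma frames_ne: "frames_p p \<tau> \<gamma> \<noteq> {}"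
proof -
  obtain x where x: "\<tau> x x < 0" using neg_vec by blast
  define x0 where "x0 = (1 / sqrt (- \<tau> x x)) *\<^sub>R x"
  have x0: "\<tau> x0 x0 = -1" unfolding x0_def using x by (simp add: tau_scale_l tau_scale_r field_simps)
  obtain ts where ts: "length ts = p+1" "ts!0 = x0" "tlist ts" using build_ts[OF x0, of "p+1"] by auto
  have pos: "\<tau> (ts!i) (ts!i) = 1" if "i < p+1" "i \<noteq> 0" for i
  proof (rule ccontr)
    assume "\<tau> (ts!i) (ts!i) \<noteq> 1"
    then have "\<tau> (ts!i) (ts!i) = -1" using ts that unfolding tlist_def by auto
    moreover have "\<tau> x0 (ts!i) = 0" using ts that unfolding tlist_def by (metis zero_less_Suc Suc_eq_plus1 gr0I)
    ultimately show False using no_neg2[OF x0] by blast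
  qed
  have T: "\<tau> (ts!A) (ts!B) = eta A B" if "A < p+1" "B < p+1" for A B
    using ts(3) that pos x0 ts(1,2) unfolding tlist_def eta_def by auto
  obtain es where es: "length es = dim K" "\<forall>i<dim K. es!i \<in> K" "\<forall>i<dim K. \<forall>j<dim K. \<gamma> (es!i) (es!j) = (if i = j then 1 else 0)"
    using build_es[of "dim K"] by auto
  have "ofr ts es" unfolding ofr_def using ts(1) es T dimK by auto
  then show ?thesis using ofr_frames by blast
qed

end


theorem proposition1:
  fixes \<tau> \<gamma> :: "'v::euclidean_space \<Rightarrow> 'v \<Rightarrow> real" and p :: nat
  defines "d \<equiv> DIM('v)"
  assumes "sym_bilinear \<tau>"
      and "form_rank \<tau> = p + 1"
      and "lorentzian_sig \<tau> p"
      and "pos_def_metric_on (kerf \<tau>) \<gamma>"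
  shows "frames_p p \<tau> \<gamma> \<noteq> {}
     \<and> (\<forall>F\<in>frames_p p \<tau> \<gamma>. \<forall>g\<in>Gp d p. frame_act p F g \<in> frames_p p \<tau> \<gamma>)
     \<and> (\<forall>F\<in>frames_p p \<tau> \<gamma>. frame_act p F (1\<^sub>m d) = F)
     \<and> (\<forall>F\<in>frames_p p \<tau> \<gamma>. \<forall>g\<in>Gp d p. \<forall>h\<in>Gp d p.
           frame_act p (frame_act p F g) h = frame_act p F (g * h))
     \<and> (\<forall>F\<in>frames_p p \<tau> \<gamma>. \<forall>g\<in>Gp d p. frame_act p F g = F \<longrightarrow> g = 1\<^sub>m d)
     \<and> (\<forall>F\<in>frames_p p \<tau> \<gamma>. \<forall>F'\<in>frames_p p \<tau> \<gamma>. \<exists>g\<in>Gp d p. frame_act p F g = F')"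
proof -
  interpret fr \<tau> \<gamma> p using assms unfolding fr_def by blast
  show ?thesis unfolding d_def using frames_ne act_mem act_one act_comp act_free act_trans by blast
qed

end
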